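(* Consider the outlier-robust estimation problem \[ \min_{\mathbf{x}\in\mathcal{X}\subseteq\mathbb{R}^d}\ \sum_{i=1}^N \rho\big(r(\mathbf{x},\mathbf{z}_i),\beta_i\big)+\psi(\mathbf{x}), \] where $\mathbf{z}_1,\dots,\mathbf{z}_N$ are given measurements, $\beta_i>0$ are given thresholds, $r(\mathbf{x},\mathbf{z}_i)$ is a scalar residual, and $\psi$ is a regularizer. Assume that (a) $r^2(\cdot,\mathbf{z}_i)$ (for each $i$) and $\psi$ are polynomials in $\mathbf{x}$, and (b) $\mathcal{X}=\{\mathbf{x}\in\mathbb{R}^d \mid h_k(\mathbf{x})=0,\ k=1,\dots,l_h,\ g_j(\mathbf{x})\ge 0,\ j=1,\dots,l_g\}$ for finitely many polynomials $h_k,g_j$. If the cost $\rho$ is one of (i) truncated least squares $\rho_{\mathrm{TLS}}(r,\beta_i)=\min\{r^2/\beta_i^2,1\}$; (ii) maximum consensus $\rho_{\mathrm{MC}}(r,\beta_i)=0$ if $|r|\le\beta_i$ and $1$ otherwise; (iii) Geman–McClure $\rho_{\mathrm{GM}}(r,\beta_i)=\dfrac{r^2/\beta_i^2}{1+r^2/\beta_i^2}$; (iv) Tukey's biweight $\rho_{\mathrm{TB}}(r,\beta_i)=\frac{r^2}{\beta_i^2}-\frac{r^4}{\beta_i^4}+\frac{r^6}{3\beta_i^6}$ if $|r|\le\beta_i$ and $\frac13$ otherwise, then the problem can be equivalently recast as a polynomial optimization problem (minimization of a polynomial subject to finitely many polynomial equality and inequality constraints) in $d+N$ variables $(\mathbf{x},\boldsymbol{\theta})\in\mathbb{R}^{d}\times\mathbb{R}^N$,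 where each additional variable $\theta_i$ indicates the confidence of measurement $\mathbf{z}_i$ being an inlier. Moreover, if $\rho$ is one of (v) L1: $\rho_{\mathrm{L1}}(r,\beta_i)=|r|/\beta_i$; (vi) Huber: $\rho_{\mathrm{HB}}(r,\beta_i)=\frac{r^2}{2\beta_i^2}$ if $|r|\le\beta_i$ and $\frac{|r|}{\beta_i}-\frac12$ otherwise; (vii) adaptive: $\rho_{\mathrm{ADT},s}(r,\beta_i)=\frac{|s-2|}{s}\Big(\big(\frac{r^2/\beta_i^2}{|s-2|}+1\big)^{s/2}-1\Big)$ for a given scale parameter $s\in\mathbb{Q}\setminus\{0,2\}$, then the problem can also be equivalently written as a polynomial optimization problem, obtained by adding slack variable(s) for each measurement.
   Context: A polynomial optimization problem (POP) is a problem of the form $\min_{\mathbf{w}\in\mathbb{R}^n}\{p(\mathbf{w}) \mid h_k(\mathbf{w})=0,\ g_j(\mathbf{w})\ge 0\}$ with $p,h_k,g_j$ real polynomials. "Equivalently recast" means the optimal values coincide and minimizers of the original problem correspond to the $\mathbf{x}$-components of minimizers of the POP. *)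

theory Defs
  imports "HOL-Analysis.Analysis"
begin

text \<open>Points of R^n are represented as functions nat => real vanishing at coordinates >= n.\<close>
definition Rn :: "nat \<Rightarrow> (nat \<Rightarrow> real) set" where
  "Rn n = {w. \<forall>i. n \<le> i \<longrightarrow> w i = 0}"

inductive polyfun :: "nat \<Rightarrow> ((nat \<Rightarrow> real) \<Rightarrow> real) \<Rightarrow> bool" for n where
  pconst: "polyfun n (\<lambda>w. c)"
| pvar: "i < n \<Longrightarrow> polyfun n (\<lambda>w. w i)"
| padd: "polyfun n p \<Longrightarrow> polyfun n q \<Longrightarrow> polyfun n (\<lambda>w. p w + q w)"
| pmul: "polyfun n p \<Longrightarrow> polyfun n q \<Longrightarrow> polyfun n (\<lambda>w. p w * q w)"

definition semialg :: "nat \<Rightarrow> ((nat \<Rightarrow> real) \<Rightarrow> real) list \<Rightarrow> ((nat \<Rightarrow> real) \<Rightarrow> real) list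
    \<Rightarrow> (nat \<Rightarrow> real) set" where
  "semialg n hs gs = {w \<in> Rn n. (\<forall>h\<in>set hs. h w = 0) \<and> (\<forall>g\<in>set gs. g w \<ge> 0)}"

definition minimizers :: "('a \<Rightarrow> real) \<Rightarrow> 'a set \<Rightarrow> 'a set" where
  "minimizers f S = {x \<in> S. \<forall>y\<in>S. f x \<le> f y}"

definition proj :: "nat \<Rightarrow> (nat \<Rightarrow> real) \<Rightarrow> (nat \<Rightarrow> real)" where
  "proj d w = (\<lambda>i. if i < d then w i else 0)"

text \<open>min_{x in X} f x (X \<subseteq> R^d) is equivalently recast as a POP in n variables whose
  first d variables are x: same optimal value (in the extended reals, covering infeasible /
  unbounded problems), and the minimizers of the original problem are exactly the
  x-components of the minimizers of the POP.\<close>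
definition recast_as_POP :: "nat \<Rightarrow> nat \<Rightarrow> ((nat \<Rightarrow> real) \<Rightarrow> real) \<Rightarrow> (nat \<Rightarrow> real) set \<Rightarrow> bool" where
  "recast_as_POP d n f X \<longleftrightarrow> d \<le> n \<and>
     (\<exists>p hs gs. polyfun n p \<and> (\<forall>h\<in>set hs. polyfun n h) \<and> (\<forall>g\<in>set gs. polyfun n g) \<and>
        (INF x\<in>X. ereal (f x)) = (INF w\<in>semialg n hs gs. ereal (p w)) \<and>
        minimizers f X = proj d ` minimizers p (semialg n hs gs))"

definition rho_TLS :: "real \<Rightarrow> real \<Rightarrow> real" where
  "rho_TLS r \<beta> = min (r\<^sup>2 / \<beta>\<^sup>2) 1"
definition rho_MC :: "real \<Rightarrow> real \<Rightarrow> real" where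
  "rho_MC r \<beta> = (if \<bar>r\<bar> \<le> \<beta> then 0 else 1)"
definition rho_GM :: "real \<Rightarrow> real \<Rightarrow> real" where
  "rho_GM r \<beta> = (r\<^sup>2 / \<beta>\<^sup>2) / (1 + r\<^sup>2 / \<beta>\<^sup>2)"
definition rho_TB :: "real \<Rightarrow> real \<Rightarrow> real" where
  "rho_TB r \<beta> = (if \<bar>r\<bar> \<le> \<beta> then r\<^sup>2 / \<beta>\<^sup>2 - r^4 / \<beta>^4 + r^6 / (3 * \<beta>^6) else 1/3)"
definition rho_L1 :: "real \<Rightarrow> real \<Rightarrow> real" where
  "rho_L1 r \<beta> = \<bar>r\<bar> / \<beta>"
definition rho_HB :: "real \<Rightarrow> real \<Rightarrow> real" where
  "rho_HB r \<beta> = (if \<bar>r\<bar> \<le> \<beta> then r\<^sup>2 / (2 * \<beta>\<^sup>2) else \<bar>r\<bar> / \<beta> - 1/2)"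
definition rho_ADT :: "real \<Rightarrow> real \<Rightarrow> real \<Rightarrow> real" where
  "rho_ADT s r \<beta> = \<bar>s - 2\<bar> / s * (((r\<^sup>2 / \<beta>\<^sup>2) / \<bar>s - 2\<bar> + 1) powr (s / 2) - 1)"

text \<open>Objective of the robust estimation problem; r i x stands for r(x, z_i).\<close>
definition robust_cost :: "(real \<Rightarrow> real \<Rightarrow> real) \<Rightarrow> nat \<Rightarrow> (nat \<Rightarrow> (nat \<Rightarrow> real) \<Rightarrow> real)
    \<Rightarrow> (nat \<Rightarrow> real) \<Rightarrow> ((nat \<Rightarrow> real) \<Rightarrow> real) \<Rightarrow> (nat \<Rightarrow> real) \<Rightarrow> real" where
  "robust_cost \<rho> N r \<beta> \<psi> x = (\<Sum>i<N. \<rho> (r i x) (\<beta> i)) + \<psi> x"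

end

theory Submission
  imports Defs
begin


lemma polyfun_dep: assumes "polyfun n p" shows "p w = p (proj n w)"
  using assms by induction (auto simp: proj_def)

lemma polyfun_mono: assumes "polyfun n p" "n \<le> m" shows "polyfun m p"
  using assms by induction (auto intro: polyfun.intros)

lemma polyfun_sub: assumes "polyfun n p" "polyfun n q" shows "polyfun n (\<lambda>w. p w - q w)"
proof -
  have "polyfun n (\<lambda>w. p w + (-1) * q w)" by (intro polyfun.padd polyfun.pmul polyfun.pconst assms)
  then show ?thesis by simp
qed

lemma polyfun_pow: assumes "polyfun n p" shows "polyfun n (\<lambda>w. p w ^ k)"
proof (induction k)
  case 0 show ?case using polyfun.pconst[of n 1] by simp
next
  case (Suc k)
  have "polyfun n (\<lambda>w. p w * p w ^ k)" by (rule polyfun.pmul[OF assms Suc])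
  then show ?case by simp
qed

lemma polyfun_divc: assumes "polyfun n p" shows "polyfun n (\<lambda>w. p w / c)"
proof -
  have "polyfun n (\<lambda>w. p w * (1/c))" by (intro polyfun.pmul polyfun.pconst assms)
  then show ?thesis by simp
qed

lemma polyfun_sum: assumes "\<And>i. i \<in> A \<Longrightarrow> polyfun n (f i)" shows "polyfun n (\<lambda>w. \<Sum>i\<in>A. f i w)"
proof (cases "finite A")
  case True then show ?thesis using assms
    by (induction A rule: finite_induct) (auto intro: polyfun.intros)
next
  case False then show ?thesis by (simp add: polyfun.pconst)
qed

lemmas pf_intros = polyfun.pconst polyfun.pvar polyfun.padd polyfun.pmul polyfun_sub polyfun_pow polyfun_divc

lemma polyfun_subst: "polyfun m P \<Longrightarrow> (\<And>j. j < m \<Longrightarrow> polyfun n (\<sigma> j)) \<Longrightarrow> polyfun n (\<lambda>w. P (\<lambda>j. \<sigma> j w))"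
  by (induction rule: polyfun.induct) (auto intro: polyfun.intros)

lemma lift_poly:
  assumes "polyfun (Suc k) (\<lambda>v. F (v 0) (\<lambda>j. v (Suc j)))" "polyfun n U" "i < N" "d + N*k \<le> n"
  shows "polyfun n (\<lambda>w. F (U w) (\<lambda>j. w (d + k*i + j)))"
proof -
  have "polyfun n (\<lambda>w. (\<lambda>v. F (v 0) (\<lambda>j. v (Suc j))) (\<lambda>j. (if j = 0 then U w else w (d + k*i + (j - 1)))))"
  proof (rule polyfun_subst[OF assms(1)])
    fix j assume j: "j < Suc k"
    show "polyfun n (\<lambda>w. if j = 0 then U w else w (d + k*i + (j - 1)))"
    proof (cases "j = 0")
      case True then show ?thesis using assms(2) by simp
    next
      case False
      have "k * Suc i \<le> k * N" using assms(3) by (intro mult_le_mono2) simp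
      then have "d + k*i + (j - 1) < n" using j False assms(4) by (simp add: algebra_simps)
      then show ?thesis using False by (simp add: polyfun.pvar)
    qed
  qed
  then show ?thesis by simp
qed

lemma gadget_dep:
  assumes "polyfun (Suc k) (\<lambda>v. F (v 0) (\<lambda>j. v (Suc j)))" "\<forall>j<k. \<theta> j = \<theta>' j"
  shows "F u \<theta> = F u \<theta>'"
proof -
  let ?P = "\<lambda>v. F (v 0) (\<lambda>j. v (Suc j))"
  define v where "v = (\<lambda>l. if l = 0 then u else \<theta> (l - 1))"
  define v' where "v' = (\<lambda>l. if l = 0 then u else \<theta>' (l - 1))"
  have "proj (Suc k) v = proj (Suc k) v'" using assms(2) by (auto simp: proj_def v_def v'_def fun_eq_iff)
  then have "?P v = ?P v'" using polyfun_dep[OF assms(1)] by metis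
  then show ?thesis by (simp add: v_def v'_def)
qed

lemma recast_intro:
  assumes "d \<le> n" "polyfun n p" "\<forall>h\<in>set hs'. polyfun n h" "\<forall>g\<in>set gs'. polyfun n g"
    and lower: "\<And>w. w \<in> semialg n hs' gs' \<Longrightarrow> proj d w \<in> X \<and> f (proj d w) \<le> p w"
    and attain: "\<And>x. x \<in> X \<Longrightarrow> \<exists>w\<in>semialg n hs' gs'. proj d w = x \<and> p w = f x"
  shows "recast_as_POP d n f X"
proof -
  let ?S = "semialg n hs' gs'"
  have inf: "(INF x\<in>X. ereal (f x)) = (INF w\<in>?S. ereal (p w))"
  proof (rule antisym)
    show "(INF x\<in>X. ereal (f x)) \<le> (INF w\<in>?S. ereal (p w))"
    proof (rule INF_greatest)
      fix w assume "w \<in> ?S"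
      with lower have "proj d w \<in> X" "f (proj d w) \<le> p w" by auto
      then show "(INF x\<in>X. ereal (f x)) \<le> ereal (p w)" by (meson INF_lower2 ereal_less_eq(3))
    qed
    show "(INF w\<in>?S. ereal (p w)) \<le> (INF x\<in>X. ereal (f x))"
    proof (rule INF_greatest)
      fix x assume "x \<in> X"
      with attain obtain w where "w\<in>?S" "p w = f x" by blast
      then show "(INF w\<in>?S. ereal (p w)) \<le> ereal (f x)" by (metis INF_lower)
    qed
  qed
  have mins: "minimizers f X = proj d ` minimizers p ?S"
  proof
    show "minimizers f X \<subseteq> proj d ` minimizers p ?S"
    proof
      fix x assume x: "x \<in> minimizers f X"
      then have "x \<in> X" by (simp add: minimizers_def)
      with attain obtain w where w: "w\<in>?S" "proj d w = x" "p w = f x" by blast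
      have "w \<in> minimizers p ?S"
        unfolding minimizers_def
      proof (intro CollectI conjI ballI)
        show "w \<in> ?S" by fact
        fix w' assume "w' \<in> ?S"
        with lower have "proj d w' \<in> X" "f (proj d w') \<le> p w'" by auto
        with x have "f x \<le> f (proj d w')" by (simp add: minimizers_def)
        then show "p w \<le> p w'" using w(3) \<open>f (proj d w') \<le> p w'\<close> by linarith
      qed
      then show "x \<in> proj d ` minimizers p ?S" using w(2) by blast
    qed
    show "proj d ` minimizers p ?S \<subseteq> minimizers f X"
    proof
      fix x assume "x \<in> proj d ` minimizers p ?S"
      then obtain w where w: "w \<in> minimizers p ?S" "x = proj d w" by blast
      then have wS: "w \<in> ?S" by (simp add: minimizers_def)
      with lower have xX: "x \<in> X" and fx: "f x \<le> p w" using w by auto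
      show "x \<in> minimizers f X"
        unfolding minimizers_def
      proof (intro CollectI conjI ballI)
        show "x \<in> X" by fact
        fix y assume "y \<in> X"
        with attain obtain w' where "w' \<in> ?S" "p w' = f y" by blast
        with w(1) have "p w \<le> f y" by (auto simp: minimizers_def)
        then show "f x \<le> f y" using fx by linarith
      qed
    qed
  qed
  show ?thesis unfolding recast_as_POP_def using assms(1-4) inf mins by blast
qed



definition gadget :: "nat \<Rightarrow> (real \<Rightarrow> real \<Rightarrow> real) \<Rightarrow> (real \<Rightarrow> real \<Rightarrow> (nat \<Rightarrow> real) \<Rightarrow> real)
   \<Rightarrow> (real \<Rightarrow> real \<Rightarrow> (nat \<Rightarrow> real) \<Rightarrow> real) list \<Rightarrow> (real \<Rightarrow> real \<Rightarrow> (nat \<Rightarrow> real) \<Rightarrow> real) list \<Rightarrow> bool" where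
 "gadget k \<rho> Q HC GC \<longleftrightarrow>
   (\<forall>b. polyfun (Suc k) (\<lambda>v. Q b (v 0) (\<lambda>j. v (Suc j)))) \<and>
   (\<forall>b. \<forall>h\<in>set HC. polyfun (Suc k) (\<lambda>v. h b (v 0) (\<lambda>j. v (Suc j)))) \<and>
   (\<forall>b. \<forall>g\<in>set GC. polyfun (Suc k) (\<lambda>v. g b (v 0) (\<lambda>j. v (Suc j)))) \<and>
   (\<forall>b>0. \<forall>x \<theta>. (\<forall>h\<in>set HC. h b (x\<^sup>2) \<theta> = 0) \<and> (\<forall>g\<in>set GC. g b (x\<^sup>2) \<theta> \<ge> 0) \<longrightarrow> \<rho> x b \<le> Q b (x\<^sup>2) \<theta>) \<and>
   (\<forall>b>0. \<forall>x. \<exists>\<theta>. (\<forall>h\<in>set HC. h b (x\<^sup>2) \<theta> = 0) \<and> (\<forall>g\<in>set GC. g b (x\<^sup>2) \<theta> \<ge> 0) \<and> Q b (x\<^sup>2) \<theta> = \<rho> x b)"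

lemma gadget_recast:
  fixes d N :: nat
    and r :: "nat \<Rightarrow> (nat \<Rightarrow> real) \<Rightarrow> real"
    and \<beta> :: "nat \<Rightarrow> real"
    and \<psi> :: "(nat \<Rightarrow> real) \<Rightarrow> real"
    and hs gs :: "((nat \<Rightarrow> real) \<Rightarrow> real) list"
  assumes G: "gadget k \<rho> Q HC GC"
    and beta_pos: "\<forall>i<N. \<beta> i > 0"
    and r2_poly: "\<forall>i<N. polyfun d (\<lambda>x. (r i x)\<^sup>2)"
    and psi_poly: "polyfun d \<psi>"
    and hs_poly: "\<forall>h\<in>set hs. polyfun d h"
    and gs_poly: "\<forall>g\<in>set gs. polyfun d g"
  shows "recast_as_POP d (d + N*k) (robust_cost \<rho> N r \<beta> \<psi>) (semialg d hs gs)"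
proof -
  define n where "n = d + N*k"
  define th where "th i w = (\<lambda>j. w (d + k*i + j))" for i and w :: "nat \<Rightarrow> real"
  define u where "u i w = (r i w)\<^sup>2" for i w
  define p where "p w = (\<Sum>i<N. Q (\<beta> i) (u i w) (th i w)) + \<psi> w" for w
  define HC' where "HC' = concat (map (\<lambda>i. map (\<lambda>h w. h (\<beta> i) (u i w) (th i w)) HC) [0..<N])"
  define GC' where "GC' = concat (map (\<lambda>i. map (\<lambda>g w. g (\<beta> i) (u i w) (th i w)) GC) [0..<N])"
  define X where "X = semialg d hs gs"
  have dn: "d \<le> n" "d + N*k \<le> n" by (auto simp: n_def)
  note Gd = G[unfolded gadget_def]
  note GQ = conjunct1[OF Gd, rule_format]
  note GH = conjunct1[OF conjunct2[OF Gd], rule_format]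
  note GG = conjunct1[OF conjunct2[OF conjunct2[OF Gd]], rule_format]
  note Glow = conjunct1[OF conjunct2[OF conjunct2[OF conjunct2[OF Gd]]], rule_format]
  note Gatt = conjunct2[OF conjunct2[OF conjunct2[OF conjunct2[OF Gd]]], rule_format]
  have upoly: "polyfun n (u i)" if "i < N" for i
    using polyfun_mono[OF r2_poly[rule_format, OF that] dn(1)] by (simp add: u_def[abs_def])
  have udep: "u i w = (r i (proj d w))\<^sup>2" if "i < N" for i w
    using polyfun_dep[OF r2_poly[rule_format, OF that]] by (simp add: u_def)
  have ppoly: "polyfun n p"
    unfolding p_def[abs_def] th_def
    by (intro polyfun.padd polyfun_sum lift_poly[OF GQ] upoly dn polyfun_mono[OF psi_poly]) (auto simp: n_def)
  have HCpoly: "\<forall>h\<in>set (hs @ HC'). polyfun n h"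
  proof
    fix h' assume "h' \<in> set (hs @ HC')"
    then consider "h' \<in> set hs" | i h where "i<N" "h\<in>set HC" "h' = (\<lambda>w. h (\<beta> i) (u i w) (th i w))"
      by (auto simp: HC'_def)
    then show "polyfun n h'"
    proof cases
      case 1 then show ?thesis using hs_poly polyfun_mono[OF _ dn(1)] by blast
    next
      case 2 then show ?thesis unfolding th_def using lift_poly[OF GH[OF 2(2)] upoly[OF 2(1)] 2(1) dn(2)] by simp
    qed
  qed
  have GCpoly: "\<forall>h\<in>set (gs @ GC'). polyfun n h"
  proof
    fix h' assume "h' \<in> set (gs @ GC')"
    then consider "h' \<in> set gs" | i h where "i<N" "h\<in>set GC" "h' = (\<lambda>w. h (\<beta> i) (u i w) (th i w))"
      by (auto simp: GC'_def)
    then show "polyfun n h'"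
    proof cases
      case 1 then show ?thesis using gs_poly polyfun_mono[OF _ dn(1)] by blast
    next
      case 2 then show ?thesis unfolding th_def using lift_poly[OF GG[OF 2(2)] upoly[OF 2(1)] 2(1) dn(2)] by simp
    qed
  qed
  have "recast_as_POP d n (robust_cost \<rho> N r \<beta> \<psi>) X"
  proof (rule recast_intro[OF dn(1) ppoly HCpoly GCpoly])
    fix w assume w: "w \<in> semialg n (hs @ HC') (gs @ GC')"
    have wh: "\<forall>h\<in>set hs. h w = 0" "\<forall>g\<in>set gs. g w \<ge> 0"
      "\<forall>h\<in>set HC'. h w = 0" "\<forall>g\<in>set GC'. g w \<ge> 0" using w by (auto simp: semialg_def)
    have e1: "h (proj d w) = h w" if "h \<in> set hs" for h
      using hs_poly polyfun_dep that by metis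
    have e2: "g (proj d w) = g w" if "g \<in> set gs" for g
      using gs_poly polyfun_dep that by metis
    have "proj d w \<in> Rn d" by (simp add: Rn_def proj_def)
    then have "proj d w \<in> X"
    proof -
      have "\<forall>h\<in>set hs. h (proj d w) = 0" using wh(1) e1 by metis
      moreover have "\<forall>g\<in>set gs. g (proj d w) \<ge> 0" using wh(2) e2 by metis
      ultimately show ?thesis using \<open>proj d w \<in> Rn d\<close> by (simp add: X_def semialg_def)
    qed
    moreover have "robust_cost \<rho> N r \<beta> \<psi> (proj d w) \<le> p w"
    proof -
      have "\<rho> (r i (proj d w)) (\<beta> i) \<le> Q (\<beta> i) (u i w) (th i w)" if i: "i < N" for i
      proof -
        have "\<forall>h\<in>set HC. h (\<beta> i) ((r i (proj d w))\<^sup>2) (th i w) = 0"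
          using wh(3) i by (auto simp: HC'_def udep)
        moreover have "\<forall>g\<in>set GC. g (\<beta> i) ((r i (proj d w))\<^sup>2) (th i w) \<ge> 0"
          using wh(4) i by (auto simp: GC'_def udep)
        ultimately show ?thesis using Glow[of "\<beta> i"] beta_pos i by (simp add: udep)
      qed
      then have "(\<Sum>i<N. \<rho> (r i (proj d w)) (\<beta> i)) \<le> (\<Sum>i<N. Q (\<beta> i) (u i w) (th i w))"
        by (intro sum_mono) auto
      moreover have "\<psi> (proj d w) = \<psi> w" using polyfun_dep[OF psi_poly] by metis
      ultimately show ?thesis by (simp add: robust_cost_def p_def)
    qed
    ultimately show "proj d w \<in> X \<and> robust_cost \<rho> N r \<beta> \<psi> (proj d w) \<le> p w" by blast
  next
    fix x assume xX: "x \<in> X"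
    define P where "P i \<theta> \<longleftrightarrow> (\<forall>h\<in>set HC. h (\<beta> i) ((r i x)\<^sup>2) \<theta> = 0) \<and> (\<forall>g\<in>set GC. g (\<beta> i) ((r i x)\<^sup>2) \<theta> \<ge> 0)
        \<and> Q (\<beta> i) ((r i x)\<^sup>2) \<theta> = \<rho> (r i x) (\<beta> i)" for i \<theta>
    define \<Theta> where "\<Theta> i = (SOME \<theta>. P i \<theta>)" for i
    have P\<Theta>: "P i (\<Theta> i)" if "i < N" for i
    proof -
      have "\<exists>\<theta>. P i \<theta>" using Gatt[of "\<beta> i" "r i x"] beta_pos that unfolding P_def by simp
      then show ?thesis unfolding \<Theta>_def by (rule someI_ex)
    qed
    define w where "w l = (if l < d then x l else if l < n then \<Theta> ((l-d) div k) ((l-d) mod k) else 0)" for l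
    have xR: "x \<in> Rn d" using xX by (simp add: X_def semialg_def)
    have pw: "proj d w = x" using xR by (auto simp: proj_def w_def Rn_def fun_eq_iff)
    have wR: "w \<in> Rn n" by (auto simp: Rn_def w_def n_def)
    have wth: "\<forall>j<k. th i w j = \<Theta> i j" if i: "i < N" for i
    proof (intro allI impI)
      fix j assume j: "j < k"
      have "k * Suc i \<le> k * N" using i by (intro mult_le_mono2) simp
      then have lt: "d + k*i + j < n" using j by (simp add: n_def algebra_simps)
      have "(k*i + j) div k = i" "(k*i+j) mod k = j" using j by simp_all
      then show "th i w j = \<Theta> i j" using lt by (simp add: th_def w_def)
    qed
    have uw: "u i w = (r i x)\<^sup>2" if "i < N" for i using udep[OF that, of w] pw by simp
    have Qeq: "Q (\<beta> i) (u i w) (th i w) = \<rho> (r i x) (\<beta> i)" if i: "i < N" for i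
      using gadget_dep[OF GQ wth[OF i], of "\<beta> i" "u i w"] P\<Theta>[OF i] uw[OF i] by (simp add: P_def)
    have "p w = robust_cost \<rho> N r \<beta> \<psi> x"
    proof -
      have "\<psi> w = \<psi> x" using polyfun_dep[OF psi_poly, of w] pw by simp
      then show ?thesis by (simp add: p_def robust_cost_def Qeq)
    qed
    moreover have "w \<in> semialg n (hs @ HC') (gs @ GC')"
    proof -
      have "\<forall>h\<in>set hs. h w = 0" "\<forall>g\<in>set gs. g w \<ge> 0"
        using xX hs_poly gs_poly polyfun_dep[of d _ w] pw by (auto simp: X_def semialg_def) metis+
      moreover have "\<forall>h\<in>set HC'. h w = 0"
      proof
        fix h' assume "h' \<in> set HC'"
        then obtain i h where i: "i < N" and h: "h \<in> set HC" and h': "h' = (\<lambda>w. h (\<beta> i) (u i w) (th i w))"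
          by (auto simp: HC'_def)
        have "h (\<beta> i) (u i w) (th i w) = h (\<beta> i) (u i w) (\<Theta> i)"
          by (rule gadget_dep[OF GH[OF h] wth[OF i]])
        then show "h' w = 0" using P\<Theta>[OF i] h uw[OF i] h' by (simp add: P_def)
      qed
      moreover have "\<forall>g\<in>set GC'. g w \<ge> 0"
      proof
        fix g' assume "g' \<in> set GC'"
        then obtain i g where i: "i < N" and g: "g \<in> set GC" and g': "g' = (\<lambda>w. g (\<beta> i) (u i w) (th i w))"
          by (auto simp: GC'_def)
        have "g (\<beta> i) (u i w) (th i w) = g (\<beta> i) (u i w) (\<Theta> i)"
          by (rule gadget_dep[OF GG[OF g] wth[OF i]])
        then show "g' w \<ge> 0" using P\<Theta>[OF i] g uw[OF i] g' by (simp add: P_def)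
      qed
      ultimately show ?thesis using wR by (auto simp: semialg_def)
    qed
    ultimately show "\<exists>w\<in>semialg n (hs @ HC') (gs @ GC'). proj d w = x \<and> p w = robust_cost \<rho> N r \<beta> \<psi> x"
      using pw by blast
  qed
  then show ?thesis by (simp add: n_def X_def)
qed



lemma absle: "b > 0 \<Longrightarrow> (\<bar>x\<bar> \<le> b) = (x\<^sup>2 \<le> (b::real)\<^sup>2)"
  using abs_le_square_iff[of x b] by simp

lemma gadget_TLS: "gadget 1 rho_TLS (\<lambda>b u \<theta>. \<theta> 0) [\<lambda>b u \<theta>. (\<theta> 0 - 1) * (\<theta> 0 - u / b^2)] []"
  unfolding gadget_def
proof (intro conjI allI impI)
  fix b :: real
  show "polyfun (Suc 1) (\<lambda>v. v (Suc 0))" by (intro pf_intros) simp_all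
  show "\<forall>h\<in>set [\<lambda>b u \<theta>. (\<theta> 0 - 1) * (\<theta> 0 - u / b^2)]. polyfun (Suc 1) (\<lambda>v. h b (v 0) (\<lambda>j. v (Suc j)))"
    by simp (intro pf_intros; simp)
  show "\<forall>g\<in>set []. polyfun (Suc 1) (\<lambda>v. g b (v 0) (\<lambda>j. v (Suc j)))" by simp
next
  fix b x :: real and \<theta> :: "nat \<Rightarrow> real"
  assume "0 < b" and h: "(\<forall>h\<in>set [\<lambda>b u \<theta>. (\<theta> 0 - 1) * (\<theta> 0 - u / b^2)]. h b (x\<^sup>2) \<theta> = 0) \<and> (\<forall>g\<in>set []. 0 \<le> g b (x\<^sup>2) \<theta>)"
  then have "\<theta> 0 = 1 \<or> \<theta> 0 = x\<^sup>2 / b^2" by simp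
  then show "rho_TLS x b \<le> \<theta> 0" by (auto simp: rho_TLS_def)
next
  fix b x :: real assume "0 < b"
  show "\<exists>\<theta>. (\<forall>h\<in>set [\<lambda>b u \<theta>. (\<theta> 0 - 1) * (\<theta> 0 - u / b^2)]. h b (x\<^sup>2) \<theta> = 0) \<and> (\<forall>g\<in>set []. 0 \<le> g b (x\<^sup>2) \<theta>) \<and> \<theta> 0 = rho_TLS x b"
    by (rule exI[of _ "\<lambda>_. rho_TLS x b"]) (auto simp: rho_TLS_def min_def)
qed

lemma gadget_MC: "gadget 1 rho_MC (\<lambda>b u \<theta>. \<theta> 0) [\<lambda>b u \<theta>. \<theta> 0 * (\<theta> 0 - 1)] [\<lambda>b u \<theta>. (1 - \<theta> 0) * (b^2 - u)]"
  unfolding gadget_def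
proof (intro conjI allI impI)
  fix b :: real
  show "polyfun (Suc 1) (\<lambda>v. v (Suc 0))" by (intro pf_intros) simp_all
  show "\<forall>h\<in>set [\<lambda>b u \<theta>. \<theta> 0 * (\<theta> 0 - 1)]. polyfun (Suc 1) (\<lambda>v. h b (v 0) (\<lambda>j. v (Suc j)))"
    by simp (intro pf_intros; simp)
  show "\<forall>g\<in>set [\<lambda>b u \<theta>. (1 - \<theta> 0) * (b^2 - u)]. polyfun (Suc 1) (\<lambda>v. g b (v 0) (\<lambda>j. v (Suc j)))"
    by simp (intro pf_intros; simp)
next
  fix b x :: real and \<theta> :: "nat \<Rightarrow> real"
  assume b: "0 < b" and h: "(\<forall>h\<in>set [\<lambda>b u \<theta>. \<theta> 0 * (\<theta> 0 - 1)]. h b (x\<^sup>2) \<theta> = 0) \<and> (\<forall>g\<in>set [\<lambda>b u \<theta>. (1 - \<theta> 0) * (b^2 - u)]. 0 \<le> g b (x\<^sup>2) \<theta>)"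
  then have t: "\<theta> 0 = 0 \<or> \<theta> 0 = 1" and g: "0 \<le> (1 - \<theta> 0) * (b^2 - x\<^sup>2)" by auto
  show "rho_MC x b \<le> \<theta> 0"
  proof (cases "\<theta> 0 = 0")
    case True
    then have "x\<^sup>2 \<le> b\<^sup>2" using g by simp
    then have "\<bar>x\<bar> \<le> b" using b absle by blast
    then show ?thesis using True by (simp add: rho_MC_def)
  next
    case False then show ?thesis using t by (simp add: rho_MC_def)
  qed
next
  fix b x :: real assume b: "0 < b"
  show "\<exists>\<theta>. (\<forall>h\<in>set [\<lambda>b u \<theta>. \<theta> 0 * (\<theta> 0 - 1)]. h b (x\<^sup>2) \<theta> = 0) \<and> (\<forall>g\<in>set [\<lambda>b u \<theta>. (1 - \<theta> 0) * (b^2 - u)]. 0 \<le> g b (x\<^sup>2) \<theta>) \<and> \<theta> 0 = rho_MC x b"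
  proof (rule exI[of _ "\<lambda>_. rho_MC x b"], cases "\<bar>x\<bar> \<le> b")
    case True
    then have "x\<^sup>2 \<le> b\<^sup>2" using b absle by blast
    then show "(\<forall>h\<in>set [\<lambda>b u \<theta>. \<theta> 0 * (\<theta> 0 - 1)]. h b (x\<^sup>2) (\<lambda>_. rho_MC x b) = 0) \<and> (\<forall>g\<in>set [\<lambda>b u \<theta>. (1 - \<theta> 0) * (b^2 - u)]. 0 \<le> g b (x\<^sup>2) (\<lambda>_. rho_MC x b)) \<and> rho_MC x b = rho_MC x b"
      using True by (simp add: rho_MC_def)
  next
    case False
    then show "(\<forall>h\<in>set [\<lambda>b u \<theta>. \<theta> 0 * (\<theta> 0 - 1)]. h b (x\<^sup>2) (\<lambda>_. rho_MC x b) = 0) \<and> (\<forall>g\<in>set [\<lambda>b u \<theta>. (1 - \<theta> 0) * (b^2 - u)]. 0 \<le> g b (x\<^sup>2) (\<lambda>_. rho_MC x b)) \<and> rho_MC x b = rho_MC x b"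
      by (simp add: rho_MC_def)
  qed
qed

lemma gadget_GM: "gadget 1 rho_GM (\<lambda>b u \<theta>. \<theta> 0) [\<lambda>b u \<theta>. \<theta> 0 * (b^2 + u) - u] []"
  unfolding gadget_def
proof (intro conjI allI impI)
  fix b :: real
  show "polyfun (Suc 1) (\<lambda>v. v (Suc 0))" by (intro pf_intros) simp_all
  show "\<forall>h\<in>set [\<lambda>b u \<theta>. \<theta> 0 * (b^2 + u) - u]. polyfun (Suc 1) (\<lambda>v. h b (v 0) (\<lambda>j. v (Suc j)))"
    by simp (intro pf_intros; simp)
  show "\<forall>g\<in>set []. polyfun (Suc 1) (\<lambda>v. g b (v 0) (\<lambda>j. v (Suc j)))" by simp
next
  fix b x :: real and \<theta> :: "nat \<Rightarrow> real"
  assume b: "0 < b" and h: "(\<forall>h\<in>set [\<lambda>b u \<theta>. \<theta> 0 * (b^2 + u) - u]. h b (x\<^sup>2) \<theta> = 0) \<and> (\<forall>g\<in>set []. 0 \<le> g b (x\<^sup>2) \<theta>)"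
  then have e: "\<theta> 0 * (b^2 + x\<^sup>2) = x\<^sup>2" by simp
  have pos: "b^2 + x\<^sup>2 > 0" using b by (simp add: add_pos_nonneg)
  have "\<theta> 0 = x\<^sup>2 / (b^2 + x\<^sup>2)" using e pos b by (simp add: eq_divide_eq)
  also have "\<dots> = rho_GM x b" using b by (simp add: rho_GM_def field_simps)
  finally show "rho_GM x b \<le> \<theta> 0" by simp
next
  fix b x :: real assume b: "0 < b"
  have pos: "b^2 + x\<^sup>2 > 0" using b by (simp add: add_pos_nonneg)
  have "rho_GM x b * (b^2 + x\<^sup>2) - x\<^sup>2 = 0" using b pos by (simp add: rho_GM_def field_simps)
  then show "\<exists>\<theta>. (\<forall>h\<in>set [\<lambda>b u \<theta>. \<theta> 0 * (b^2 + u) - u]. h b (x\<^sup>2) \<theta> = 0) \<and> (\<forall>g\<in>set []. 0 \<le> g b (x\<^sup>2) \<theta>) \<and> \<theta> 0 = rho_GM x b"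
    by (intro exI[of _ "\<lambda>_. rho_GM x b"]) simp
qed

lemma TB_min:
  assumes b: "b > 0"
  shows "rho_TB x b = min (x\<^sup>2/b^2 - (x\<^sup>2/b^2)^2 + (x\<^sup>2/b^2)^3/3) (1/3)"
proof -
  define v where "v = x\<^sup>2/b^2"
  have e1: "x^4/b^4 = v^2" "x^6/(3*b^6) = v^3/3" by (simp_all add: v_def power_divide flip: power_mult)
  have key: "v - v^2 + v^3/3 - 1/3 = (v - 1)^3/3" by (simp add: power3_eq_cube power2_eq_square algebra_simps)
  have iff: "\<bar>x\<bar> \<le> b \<longleftrightarrow> v \<le> 1"
    using b absle[OF b, of x] by (simp add: v_def divide_le_eq_1)
  show ?thesis
  proof (cases "v \<le> 1")
    case True
    then have "(v - 1)^3 \<le> 0" by (simp add: power_le_zero_eq)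
    then have "v - v^2 + v^3/3 \<le> 1/3" using key by linarith
    then show ?thesis using True iff e1 by (simp add: rho_TB_def v_def[symmetric] min_def)
  next
    case False
    then have "(v - 1)^3 > 0" by simp
    then have "v - v^2 + v^3/3 > 1/3" using key by linarith
    then show ?thesis using False iff e1 by (simp add: rho_TB_def v_def[symmetric] min_def)
  qed
qed

lemma gadget_TB: "gadget 1 rho_TB (\<lambda>b u \<theta>. \<theta> 0)
   [\<lambda>b u \<theta>. (\<theta> 0 - (u/b^2 - (u/b^2)^2 + (u/b^2)^3/3)) * (\<theta> 0 - 1/3)] []"
  unfolding gadget_def
proof (intro conjI allI impI)
  fix b :: real
  show "polyfun (Suc 1) (\<lambda>v. v (Suc 0))" by (intro pf_intros) simp_all
  show "\<forall>h\<in>set [\<lambda>b u \<theta>. (\<theta> 0 - (u/b^2 - (u/b^2)^2 + (u/b^2)^3/3)) * (\<theta> 0 - 1/3)]. polyfun (Suc 1) (\<lambda>v. h b (v 0) (\<lambda>j. v (Suc j)))"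
    by simp (intro pf_intros; simp)
  show "\<forall>g\<in>set []. polyfun (Suc 1) (\<lambda>v. g b (v 0) (\<lambda>j. v (Suc j)))" by simp
next
  fix b x :: real and \<theta> :: "nat \<Rightarrow> real"
  assume b: "0 < b" and h: "(\<forall>h\<in>set [\<lambda>b u \<theta>. (\<theta> 0 - (u/b^2 - (u/b^2)^2 + (u/b^2)^3/3)) * (\<theta> 0 - 1/3)]. h b (x\<^sup>2) \<theta> = 0) \<and> (\<forall>g\<in>set []. 0 \<le> g b (x\<^sup>2) \<theta>)"
  then have "\<theta> 0 = (x\<^sup>2/b^2 - (x\<^sup>2/b^2)^2 + (x\<^sup>2/b^2)^3/3) \<or> \<theta> 0 = 1/3" by simp
  then show "rho_TB x b \<le> \<theta> 0" using TB_min[OF b, of x] by auto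
next
  fix b x :: real assume b: "0 < b"
  show "\<exists>\<theta>. (\<forall>h\<in>set [\<lambda>b u \<theta>. (\<theta> 0 - (u/b^2 - (u/b^2)^2 + (u/b^2)^3/3)) * (\<theta> 0 - 1/3)]. h b (x\<^sup>2) \<theta> = 0) \<and> (\<forall>g\<in>set []. 0 \<le> g b (x\<^sup>2) \<theta>) \<and> \<theta> 0 = rho_TB x b"
    by (rule exI[of _ "\<lambda>_. rho_TB x b"]) (simp add: TB_min[OF b] min_def)
qed



lemma sqrt_helper:
  fixes b t x :: real
  assumes "b > 0" "t \<ge> 0" "b^2 * t^2 - x\<^sup>2 = 0"
  shows "t = \<bar>x\<bar> / b"
proof -
  have "(b*t)^2 = \<bar>x\<bar>^2" using assms(3) by (simp add: power_mult_distrib)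
  then have "\<bar>b*t\<bar> = \<bar>x\<bar>" by (metis abs_abs real_sqrt_abs)
  then have "b*t = \<bar>x\<bar>" using assms(1,2) by simp
  then show ?thesis using assms(1) by (simp add: field_simps)
qed

lemma gadget_L1: "gadget 1 rho_L1 (\<lambda>b u \<theta>. \<theta> 0) [\<lambda>b u \<theta>. b^2 * \<theta> 0 ^ 2 - u] [\<lambda>b u \<theta>. \<theta> 0]"
  unfolding gadget_def
proof (intro conjI allI impI)
  fix b :: real
  show "polyfun (Suc 1) (\<lambda>v. v (Suc 0))" by (intro pf_intros) simp_all
  show "\<forall>h\<in>set [\<lambda>b u \<theta>. b^2 * \<theta> 0 ^ 2 - u]. polyfun (Suc 1) (\<lambda>v. h b (v 0) (\<lambda>j. v (Suc j)))"
    by simp (intro pf_intros; simp)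
  show "\<forall>g\<in>set [\<lambda>b u \<theta>. \<theta> 0]. polyfun (Suc 1) (\<lambda>v. g b (v 0) (\<lambda>j. v (Suc j)))"
    by simp (intro pf_intros; simp)
next
  fix b x :: real and \<theta> :: "nat \<Rightarrow> real"
  assume b: "0 < b" and h: "(\<forall>h\<in>set [\<lambda>b u \<theta>. b^2 * \<theta> 0 ^ 2 - u]. h b (x\<^sup>2) \<theta> = 0) \<and> (\<forall>g\<in>set [\<lambda>b u \<theta>. \<theta> 0]. 0 \<le> g b (x\<^sup>2) \<theta>)"
  then have "\<theta> 0 = \<bar>x\<bar> / b" by (intro sqrt_helper) auto
  then show "rho_L1 x b \<le> \<theta> 0" by (simp add: rho_L1_def)
next
  fix b x :: real assume b: "0 < b"
  have "b^2 * (\<bar>x\<bar>/b)^2 - x\<^sup>2 = 0" using b by (simp add: power_divide)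
  then show "\<exists>\<theta>. (\<forall>h\<in>set [\<lambda>b u \<theta>. b^2 * \<theta> 0 ^ 2 - u]. h b (x\<^sup>2) \<theta> = 0) \<and> (\<forall>g\<in>set [\<lambda>b u \<theta>. \<theta> 0]. 0 \<le> g b (x\<^sup>2) \<theta>) \<and> \<theta> 0 = rho_L1 x b"
    using b by (intro exI[of _ "\<lambda>_. \<bar>x\<bar>/b"]) (simp add: rho_L1_def)
qed

lemma HB_exact:
  fixes b x :: real and \<theta> :: "nat \<Rightarrow> real"
  assumes b: "b > 0" and t0: "\<theta> 0 \<ge> 0" and te: "b^2 * \<theta> 0 ^ 2 - x\<^sup>2 = 0"
    and a1: "1 - \<theta> 1 \<ge> 0" and a2: "\<theta> 0 - \<theta> 1 \<ge> 0" and a3: "(1 - \<theta> 1) * (\<theta> 0 - \<theta> 1) = 0"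
  shows "\<theta> 1 ^ 2 / 2 + \<theta> 0 - \<theta> 1 = rho_HB x b"
proof -
  have t: "\<theta> 0 = \<bar>x\<bar> / b" using sqrt_helper[OF b t0 te] .
  have iff: "\<bar>x\<bar> \<le> b \<longleftrightarrow> \<theta> 0 \<le> 1" using b by (simp add: t divide_le_eq_1)
  show ?thesis
  proof (cases "\<theta> 0 \<le> 1")
    case True
    then have "\<theta> 1 = \<theta> 0" using a1 a2 a3 by auto
    moreover have xb: "\<bar>x\<bar> \<le> b" using True iff by blast
    moreover have "\<theta> 0 ^ 2 / 2 = x\<^sup>2 / (2 * b\<^sup>2)" by (simp add: t power_divide)
    ultimately show ?thesis by (simp add: rho_HB_def)
  next
    case False
    then have "\<theta> 1 = 1" using a1 a2 a3 by auto
    moreover have xb: "\<not> \<bar>x\<bar> \<le> b" using False iff by blast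
    ultimately show ?thesis by (simp add: rho_HB_def t)
  qed
qed

lemma gadget_HB: "gadget 2 rho_HB (\<lambda>b u \<theta>. \<theta> 1 ^ 2 / 2 + \<theta> 0 - \<theta> 1)
   [\<lambda>b u \<theta>. b^2 * \<theta> 0 ^ 2 - u, \<lambda>b u \<theta>. (1 - \<theta> 1) * (\<theta> 0 - \<theta> 1)]
   [\<lambda>b u \<theta>. \<theta> 0, \<lambda>b u \<theta>. 1 - \<theta> 1, \<lambda>b u \<theta>. \<theta> 0 - \<theta> 1]"
  unfolding gadget_def
proof (intro conjI allI impI)
  fix b :: real
  show "polyfun (Suc 2) (\<lambda>v. v (Suc 1) ^ 2 / 2 + v (Suc 0) - v (Suc 1))" by (intro pf_intros) simp_all
  show "\<forall>h\<in>set [\<lambda>b u \<theta>. b^2 * \<theta> 0 ^ 2 - u, \<lambda>b u \<theta>. (1 - \<theta> 1) * (\<theta> 0 - \<theta> 1)]. polyfun (Suc 2) (\<lambda>v. h b (v 0) (\<lambda>j. v (Suc j)))"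
    by simp (intro conjI pf_intros; simp)
  show "\<forall>g\<in>set [\<lambda>b u \<theta>. \<theta> 0, \<lambda>b u \<theta>. 1 - \<theta> 1, \<lambda>b u \<theta>. \<theta> 0 - \<theta> 1]. polyfun (Suc 2) (\<lambda>v. g b (v 0) (\<lambda>j. v (Suc j)))"
    by simp (intro conjI pf_intros; simp)
next
  fix b x :: real and \<theta> :: "nat \<Rightarrow> real"
  assume b: "0 < b" and h: "(\<forall>h\<in>set [\<lambda>b u \<theta>. b^2 * \<theta> 0 ^ 2 - u, \<lambda>b u \<theta>. (1 - \<theta> 1) * (\<theta> 0 - \<theta> 1)]. h b (x\<^sup>2) \<theta> = 0) \<and> (\<forall>g\<in>set [\<lambda>b u \<theta>. \<theta> 0, \<lambda>b u \<theta>. 1 - \<theta> 1, \<lambda>b u \<theta>. \<theta> 0 - \<theta> 1]. 0 \<le> g b (x\<^sup>2) \<theta>)"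
  then show "rho_HB x b \<le> \<theta> 1 ^ 2 / 2 + \<theta> 0 - \<theta> 1" using HB_exact[OF b, of \<theta> x] by simp
next
  fix b x :: real assume b: "0 < b"
  define \<theta> where "\<theta> = (\<lambda>j::nat. if j = 0 then \<bar>x\<bar>/b else min (\<bar>x\<bar>/b) 1)"
  have c: "\<theta> 0 \<ge> 0" "b^2 * \<theta> 0 ^ 2 - x\<^sup>2 = 0" "1 - \<theta> 1 \<ge> 0" "\<theta> 0 - \<theta> 1 \<ge> 0" "(1 - \<theta> 1) * (\<theta> 0 - \<theta> 1) = 0"
    using b by (auto simp: \<theta>_def power_divide min_def)
  have "(\<forall>h\<in>set [\<lambda>b u \<theta>. b^2 * \<theta> 0 ^ 2 - u, \<lambda>b u \<theta>. (1 - \<theta> 1) * (\<theta> 0 - \<theta> 1)]. h b (x\<^sup>2) \<theta> = 0) \<and> (\<forall>g\<in>set [\<lambda>b u \<theta>. \<theta> 0, \<lambda>b u \<theta>. 1 - \<theta> 1, \<lambda>b u \<theta>. \<theta> 0 - \<theta> 1]. 0 \<le> g b (x\<^sup>2) \<theta>) \<and> \<theta> 1 ^ 2 / 2 + \<theta> 0 - \<theta> 1 = rho_HB x b"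
    using c HB_exact[OF b c] by simp
  then show "\<exists>\<theta>::nat\<Rightarrow>real. (\<forall>h\<in>set [\<lambda>b u \<theta>. b^2 * \<theta> 0 ^ 2 - u, \<lambda>b u \<theta>. (1 - \<theta> 1) * (\<theta> 0 - \<theta> 1)]. h b (x\<^sup>2) \<theta> = 0) \<and> (\<forall>g\<in>set [\<lambda>b u \<theta>. \<theta> 0, \<lambda>b u \<theta>. 1 - \<theta> 1, \<lambda>b u \<theta>. \<theta> 0 - \<theta> 1]. 0 \<le> g b (x\<^sup>2) \<theta>) \<and> \<theta> 1 ^ 2 / 2 + \<theta> 0 - \<theta> 1 = rho_HB x b"
    by blast
qed



lemma gadget_ADT:
  assumes s: "s \<in> \<rat>" "s \<noteq> 0" "s \<noteq> 2"
  shows "\<exists>Q HC GC. gadget 2 (rho_ADT s) Q HC GC"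
proof -
  obtain a c :: int where c: "c > 0" and sac: "s = of_int a / of_int c" using Rats_cases'[OF s(1)] by metis
  have a0: "a \<noteq> 0" using s(2) sac by auto
  define cc where "cc = \<bar>s - 2\<bar>"
  have cc: "cc > 0" using s(3) by (simp add: cc_def)
  define q where "q = 2 * nat c"
  have q: "q > 0" using c by (simp add: q_def)
  define Q where "Q = (\<lambda>(b::real) (u::real) (\<theta>::nat\<Rightarrow>real). cc / s * (\<theta> 1 - 1))"
  define H1 where "H1 = (\<lambda>(b::real) (u::real) (\<theta>::nat\<Rightarrow>real). \<theta> 0 ^ q - (u / b^2 / cc + 1))"
  define H2 where "H2 = (\<lambda>(b::real) (u::real) (\<theta>::nat\<Rightarrow>real). if a > 0 then \<theta> 1 - \<theta> 0 ^ nat a else \<theta> 1 * \<theta> 0 ^ nat (-a) - 1)"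
  define G1 where "G1 = (\<lambda>(b::real) (u::real) (\<theta>::nat\<Rightarrow>real). \<theta> 0)"
  have qs: "real q * (s/2) = real_of_int a" using c by (simp add: q_def sac)
  have exact: "Q b (x\<^sup>2) \<theta> = rho_ADT s x b"
    if h1: "H1 b (x\<^sup>2) \<theta> = 0" and h2: "H2 b (x\<^sup>2) \<theta> = 0" and g1: "G1 b (x\<^sup>2) \<theta> \<ge> 0" for b x \<theta>
  proof -
    define B where "B = x\<^sup>2/b\<^sup>2/cc + 1"
    have B1: "B \<ge> 1" using cc by (simp add: B_def)
    have tq: "\<theta> 0 ^ q = B" using h1 by (simp add: H1_def B_def)
    have t0: "\<theta> 0 > 0"
    proof (rule ccontr)
      assume "\<not> \<theta> 0 > 0"
      then have "\<theta> 0 = 0" using g1 by (simp add: G1_def)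
      then show False using tq q B1 by (simp add: power_0_left)
    qed
    have "B powr (s/2) = (\<theta> 0 powr real q) powr (s/2)" using tq powr_realpow[OF t0, of q] by simp
    also have "\<dots> = \<theta> 0 powr (real_of_int a)" using qs by (simp add: powr_powr times_divide_eq_right[symmetric] del: times_divide_eq_right)
    also have "\<dots> = (if a \<ge> 0 then \<theta> 0 ^ nat a else 1 / \<theta> 0 ^ nat (-a))" by (rule powr_int[OF t0])
    also have "\<dots> = \<theta> 1"
    proof (cases "a > 0")
      case True then show ?thesis using h2 by (simp add: H2_def)
    next
      case False
      then have "\<theta> 1 * \<theta> 0 ^ nat (-a) = 1" using h2 by (simp add: H2_def)
      moreover have "\<theta> 0 ^ nat (-a) > 0" using t0 by simp
      ultimately have "\<theta> 1 = 1 / \<theta> 0 ^ nat (-a)" using t0 by (simp add: eq_divide_eq)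
      then show ?thesis using False a0 by simp
    qed
    finally have "B powr (s/2) = \<theta> 1" .
    then show ?thesis by (simp add: Q_def rho_ADT_def cc_def B_def)
  qed
  have "gadget 2 (rho_ADT s) Q [H1, H2] [G1]"
    unfolding gadget_def
  proof (intro conjI allI impI)
    fix b :: real
    show "polyfun (Suc 2) (\<lambda>v. Q b (v 0) (\<lambda>j. v (Suc j)))"
      unfolding Q_def by (intro pf_intros) simp_all
    have "polyfun (Suc 2) (\<lambda>v. H1 b (v 0) (\<lambda>j. v (Suc j)))"
      unfolding H1_def by (intro pf_intros) simp_all
    moreover have "polyfun (Suc 2) (\<lambda>v. H2 b (v 0) (\<lambda>j. v (Suc j)))"
    proof (cases "a > 0")
      case True then show ?thesis unfolding H2_def by simp (intro pf_intros; simp)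
    next
      case False then show ?thesis unfolding H2_def by simp (intro pf_intros; simp)
    qed
    ultimately show "\<forall>h\<in>set [H1, H2]. polyfun (Suc 2) (\<lambda>v. h b (v 0) (\<lambda>j. v (Suc j)))" by simp
    show "\<forall>g\<in>set [G1]. polyfun (Suc 2) (\<lambda>v. g b (v 0) (\<lambda>j. v (Suc j)))"
      unfolding G1_def by simp (intro pf_intros; simp)
  next
    fix b x :: real and \<theta> :: "nat \<Rightarrow> real"
    assume "0 < b" "(\<forall>h\<in>set [H1, H2]. h b (x\<^sup>2) \<theta> = 0) \<and> (\<forall>g\<in>set [G1]. 0 \<le> g b (x\<^sup>2) \<theta>)"
    then show "rho_ADT s x b \<le> Q b (x\<^sup>2) \<theta>" using exact[of b x \<theta>] by simp
  next
    fix b x :: real assume b: "0 < b"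
    define B where "B = x\<^sup>2/b\<^sup>2/cc + 1"
    have B1: "B \<ge> 1" using cc by (simp add: B_def)
    define t where "t = root q B"
    have t0: "t > 0" using q B1 by (simp add: t_def)
    have tq: "t ^ q = B" using q B1 by (simp add: t_def real_root_pow_pos2)
    define \<theta> where "\<theta> = (\<lambda>j::nat. if j = 0 then t else if a > 0 then t ^ nat a else 1 / t ^ nat (-a))"
    have h1: "H1 b (x\<^sup>2) \<theta> = 0" using tq by (simp add: H1_def \<theta>_def B_def)
    have h2: "H2 b (x\<^sup>2) \<theta> = 0" using t0 by (simp add: H2_def \<theta>_def)
    have g1: "G1 b (x\<^sup>2) \<theta> \<ge> 0" using t0 by (simp add: G1_def \<theta>_def)
    have "(\<forall>h\<in>set [H1, H2]. h b (x\<^sup>2) \<theta> = 0) \<and> (\<forall>g\<in>set [G1]. 0 \<le> g b (x\<^sup>2) \<theta>) \<and> Q b (x\<^sup>2) \<theta> = rho_ADT s x b"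
      using h1 h2 g1 exact[OF h1 h2 g1] by simp
    then show "\<exists>\<theta>. (\<forall>h\<in>set [H1, H2]. h b (x\<^sup>2) \<theta> = 0) \<and> (\<forall>g\<in>set [G1]. 0 \<le> g b (x\<^sup>2) \<theta>) \<and> Q b (x\<^sup>2) \<theta> = rho_ADT s x b"
      by blast
  qed
  then show ?thesis by blast
qed

theorem proposition1:
  fixes d N :: nat
    and r :: "nat \<Rightarrow> (nat \<Rightarrow> real) \<Rightarrow> real"
    and \<beta> :: "nat \<Rightarrow> real"
    and \<psi> :: "(nat \<Rightarrow> real) \<Rightarrow> real"
    and hs gs :: "((nat \<Rightarrow> real) \<Rightarrow> real) list"
  assumes beta_pos: "\<forall>i<N. \<beta> i > 0"
    and r2_poly: "\<forall>i<N. polyfun d (\<lambda>x. (r i x)\<^sup>2)"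
    and psi_poly: "polyfun d \<psi>"
    and hs_poly: "\<forall>h\<in>set hs. polyfun d h"
    and gs_poly: "\<forall>g\<in>set gs. polyfun d g"
  shows "(\<forall>\<rho> \<in> {rho_TLS, rho_MC, rho_GM, rho_TB}.
            recast_as_POP d (d + N) (robust_cost \<rho> N r \<beta> \<psi>) (semialg d hs gs))
       \<and> (\<forall>\<rho> \<in> {rho_L1, rho_HB} \<union> {rho_ADT s | s. s \<in> \<rat> \<and> s \<noteq> 0 \<and> s \<noteq> 2}.
            \<exists>m. recast_as_POP d (d + m) (robust_cost \<rho> N r \<beta> \<psi>) (semialg d hs gs))"
proof (intro conjI ballI)
  fix \<rho> assume "\<rho> \<in> {rho_TLS, rho_MC, rho_GM, rho_TB}"
  then have "\<exists>Q HC GC. gadget 1 \<rho> Q HC GC"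
    using gadget_TLS gadget_MC gadget_GM gadget_TB by blast
  then obtain Q HC GC where G: "gadget 1 \<rho> Q HC GC" by blast
  show "recast_as_POP d (d + N) (robust_cost \<rho> N r \<beta> \<psi>) (semialg d hs gs)"
    using gadget_recast[OF G beta_pos r2_poly psi_poly hs_poly gs_poly] by simp
next
  fix \<rho> assume "\<rho> \<in> {rho_L1, rho_HB} \<union> {rho_ADT s | s. s \<in> \<rat> \<and> s \<noteq> 0 \<and> s \<noteq> 2}"
  then have "\<exists>k Q HC GC. gadget k \<rho> Q HC GC"
    using gadget_L1 gadget_HB gadget_ADT by blast
  then obtain k Q HC GC where G: "gadget k \<rho> Q HC GC" by blast
  show "\<exists>m. recast_as_POP d (d + m) (robust_cost \<rho> N r \<beta> \<psi>) (semialg d hs gs)"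
    using gadget_recast[OF G beta_pos r2_poly psi_poly hs_poly gs_poly] by blast
qed

end
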